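(* Let $A$ and $\Lambda$ be as in the context and suppose $A^TA$ is singular. Let $d\ge 1$, $Q\in\mathbb R^{(m+1)\times d}$ (the matrix whose rows are the data points $\mathbf Q_0,\dots,\mathbf Q_m$), and let $P^{(0)}\in\mathbb R^{(n+1)\times d}$ be arbitrary. Define the sequence $$P^{(k+1)}=(I-\Lambda A^TA)P^{(k)}+\Lambda A^TQ,\qquad k=0,1,2,\dots,$$ where $I$ is the $(n+1)\times(n+1)$ identity. Then the sequence $(P^{(k)})_{k\ge 0}$ converges.
   Context: Let $n \le m$ be nonnegative integers. Let $B_0,\dots,B_n$ be real-valued basis functions (e.g. B-spline basis functions, tensor-product B-spline basis functions, or T-spline blending functions) that are nonnegative and form a partition of unity, i.e. $B_i(\mathbf t)\ge 0$ and $\sum_{i=0}^n B_i(\mathbf t)=1$ for every parameter $\mathbf t$. Let $\mathbf t_0,\dots,\mathbf t_m$ be parameter values assigned to data points $\mathbf Q_0,\dots,\mathbf Q_m$, and assume that for every $i$ there is some $j$ with $B_i(\mathbf t_j)\neq 0$. Let $A$ be the $(m+1)\times(n+1)$ matrix with entries $A_{ji}=B_i(\mathbf t_j)$. Let $\Lambda=\mathrm{diag}\big(1/\sum_{j=0}^m B_0(\mathbf t_j),\dots,1/\sum_{j=0}^m B_n(\mathbf t_j)\big)$, a diagonal matrix with positive diagonal entries. (This iteration is the LSPIA iteration for least-squares fitting.) *)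

theory Defs
  imports Complex_Main "Jordan_Normal_Form.Determinant"
begin

text \<open>Entrywise convergence of a sequence of r x c real matrices
  (equivalent to convergence in any norm on the finite-dimensional matrix space).\<close>
definition mat_seq_convergent :: "nat \<Rightarrow> nat \<Rightarrow> (nat \<Rightarrow> real mat) \<Rightarrow> bool" where
  "mat_seq_convergent r c P \<longleftrightarrow>
     (\<exists>L \<in> carrier_mat r c. \<forall>i<r. \<forall>j<c. (\<lambda>k. P k $$ (i, j)) \<longlonglongrightarrow> L $$ (i, j))"

end

theory Submission
  imports Defs
begin




lemma lin_dep_exists:
  fixes u :: "nat \<Rightarrow> nat \<Rightarrow> real" and N :: nat
  shows "\<exists>c. (\<exists>i\<le>N. c i \<noteq> 0) \<and> (\<forall>r<N. (\<Sum>i\<le>N. c i * u i r) = 0)"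
proof -
  define V where "V = mat (Suc N) (Suc N) (\<lambda>(r,i). if r < N then u i r else 0)"
  have V: "V \<in> carrier_mat (Suc N) (Suc N)" unfolding V_def by auto
  have "multrow N 0 V = V"
    unfolding mat_multrow_def V_def by (rule eq_matI) auto
  hence "det V = 0 * det V" using det_multrow[OF _ V, of N 0] by simp
  hence "det V = 0" by simp
  then obtain v where v: "v \<in> carrier_vec (Suc N)" "v \<noteq> 0\<^sub>v (Suc N)" "V *\<^sub>v v = 0\<^sub>v (Suc N)"
    using det_0_iff_vec_prod_zero_field[OF V] by auto
  define c where "c i = v $ i" for i
  have "\<exists>i\<le>N. c i \<noteq> 0"
  proof (rule ccontr)
    assume "\<not> ?thesis"
    hence "v = 0\<^sub>v (Suc N)" using v(1) unfolding c_def by (intro eq_vecI) auto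
    thus False using v(2) by simp
  qed
  moreover have "(\<Sum>i\<le>N. c i * u i r) = 0" if r: "r < N" for r
  proof -
    have "(V *\<^sub>v v) $ r = 0" using v(3) r by simp
    moreover have "(V *\<^sub>v v) $ r = (\<Sum>i<Suc N. u i r * v $ i)"
      using r v(1) V unfolding V_def by (simp add: scalar_prod_def row_def atLeast0LessThan)
    ultimately show ?thesis unfolding c_def using lessThan_Suc_atMost
      by (metis (no_types, lifting) mult.commute sum.cong)
  qed
  ultimately show ?thesis by blast
qed

definition lin :: "nat \<Rightarrow> (nat \<Rightarrow> nat \<Rightarrow> real) \<Rightarrow> (nat \<Rightarrow> real) \<Rightarrow> nat \<Rightarrow> real" where
  "lin n L x = (\<lambda>r. \<Sum>i\<le>n. L r i * x i)"

lemma lin_sum: "lin n L (\<lambda>r. \<Sum>k\<in>I. c k * f k r) = (\<lambda>r. \<Sum>k\<in>I. c k * lin n L (f k) r)"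
  unfolding lin_def
  by (rule ext) (simp add: sum_distrib_left sum.swap[of _ I] mult_ac)

lemma lin_pow_sum: "(lin n L ^^ k) (\<lambda>r. \<Sum>q\<in>I. c q * f q r) = (\<lambda>r. \<Sum>q\<in>I. c q * (lin n L ^^ k) (f q) r)"
  by (induction k) (simp_all add: lin_sum)

lemma lin_diff: "lin n L (\<lambda>r. x r - y r) = (\<lambda>r. lin n L x r - lin n L y r)"
  unfolding lin_def by (rule ext) (simp add: sum_subtractf algebra_simps)

lemma lin_add: "lin n L (\<lambda>r. x r + y r) = (\<lambda>r. lin n L x r + lin n L y r)"
  unfolding lin_def by (rule ext) (simp add: sum.distrib algebra_simps)

lemma lin_scale: "lin n L (\<lambda>r. a * x r) = (\<lambda>r. a * lin n L x r)"
  unfolding lin_def by (rule ext) (simp add: sum_distrib_left algebra_simps)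

lemma lin_zero: "lin n L (\<lambda>r. 0) = (\<lambda>r. 0)"
  unfolding lin_def by simp

lemma lin_cong: "(\<And>i. i \<le> n \<Longrightarrow> x i = y i) \<Longrightarrow> lin n L x = lin n L y"
  unfolding lin_def by (rule ext) (simp)

locale lsp =
  fixes n m :: nat and b :: "nat \<Rightarrow> nat \<Rightarrow> real"
  assumes bnn: "\<And>j i. i \<le> n \<Longrightarrow> b j i \<ge> 0"
  and bsum: "\<And>j. (\<Sum>i\<le>n. b j i) = 1"
  and spos: "\<And>i. i \<le> n \<Longrightarrow> (\<Sum>j\<le>m. b j i) > 0"
begin

definition s where "s i = (\<Sum>j\<le>m. b j i)"
definition kk where "kk r i = (if r \<le> n then (\<Sum>j\<le>m. b j r * b j i) / s r else 0)"
definition tt where "tt r i = (if r = i \<and> r \<le> n then 1 else 0) - kk r i"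
abbreviation "K \<equiv> lin n kk"
abbreviation "T \<equiv> lin n tt"
definition Ax where "Ax x j = (\<Sum>i\<le>n. b j i * x i)"
definition ip where "ip x y = (\<Sum>i\<le>n. s i * x i * y i)"

lemma s_pos: "i \<le> n \<Longrightarrow> s i > 0" using spos unfolding s_def by auto

lemma K_out: "n < r \<Longrightarrow> K x r = 0" unfolding lin_def kk_def by simp
lemma T_out: "n < r \<Longrightarrow> T x r = 0" unfolding lin_def tt_def kk_def by simp

lemma T_eq: assumes "r \<le> n" shows "T x r = x r - K x r"
proof -
  have "T x r = (\<Sum>i\<le>n. (if r = i then x i else 0) - kk r i * x i)"
    unfolding lin_def tt_def using assms by (intro sum.cong) (auto simp: left_diff_distrib)
  thus ?thesis using assms by (simp add: sum_subtractf lin_def sum.delta sum.delta')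
qed

lemma ip_K: "ip x (K y) = (\<Sum>j\<le>m. Ax x j * Ax y j)"
proof -
  have "ip x (K y) = (\<Sum>i\<le>n. \<Sum>l\<le>n. \<Sum>j\<le>m. x i * y l * (b j i * b j l))"
    unfolding ip_def lin_def
  proof (rule sum.cong[OF refl])
    fix i assume i: "i \<in> {..n}"
    have "s i * x i * (\<Sum>l\<le>n. kk i l * y l) = (\<Sum>l\<le>n. x i * y l * (s i * kk i l))"
      by (simp add: sum_distrib_left mult_ac)
    also have "\<dots> = (\<Sum>l\<le>n. x i * y l * (\<Sum>j\<le>m. b j i * b j l))"
    proof -
      have "s i * kk i l = (\<Sum>j\<le>m. b j i * b j l)" for l
        using i s_pos[of i] unfolding kk_def by simp
      thus ?thesis by simp
    qed
    also have "\<dots> = (\<Sum>l\<le>n. \<Sum>j\<le>m. x i * y l * (b j i * b j l))"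
      by (simp add: sum_distrib_left)
    finally show "s i * x i * (\<Sum>l\<le>n. kk i l * y l) = (\<Sum>l\<le>n. \<Sum>j\<le>m. x i * y l * (b j i * b j l))" .
  qed
  also have "\<dots> = (\<Sum>j\<le>m. \<Sum>i\<le>n. \<Sum>l\<le>n. x i * y l * (b j i * b j l))"
    by (simp add: sum.swap[of _ "{..m}"])
  also have "\<dots> = (\<Sum>j\<le>m. Ax x j * Ax y j)"
    unfolding Ax_def by (simp add: sum_product mult_ac)
  finally show ?thesis .
qed

lemma ip_sym: "ip x y = ip y x" unfolding ip_def by (simp add: mult_ac)

lemma K_sym: "ip x (K y) = ip (K x) y"
  by (simp add: ip_K ip_sym[of "K x"] mult.commute)

lemma ip_diff1: "ip (\<lambda>r. x r - y r) z = ip x z - ip y z"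
  unfolding ip_def by (simp add: sum_subtractf algebra_simps)
lemma ip_diff2: "ip z (\<lambda>r. x r - y r) = ip z x - ip z y"
  unfolding ip_def by (simp add: sum_subtractf algebra_simps)
lemma ip_add1: "ip (\<lambda>r. x r + y r) z = ip x z + ip y z"
  unfolding ip_def by (simp add: sum.distrib algebra_simps)
lemma ip_scale1: "ip (\<lambda>r. a * x r) z = a * ip x z"
  unfolding ip_def by (simp add: sum_distrib_left algebra_simps)
lemma ip_zero2: "ip x (\<lambda>r. 0) = 0" unfolding ip_def by simp

lemma ip_cong2: "(\<And>i. i \<le> n \<Longrightarrow> y i = z i) \<Longrightarrow> ip x y = ip x z"
  unfolding ip_def by simp

lemma ip_term_nonneg: "i \<le> n \<Longrightarrow> 0 \<le> s i * x i * x i"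
  using s_pos[of i] by (metis less_imp_le mult.assoc mult_nonneg_nonneg zero_le_square)

lemma ip_nonneg: "ip x x \<ge> 0"
  unfolding ip_def using ip_term_nonneg by (auto intro!: sum_nonneg)

lemma ip_coord: "i \<le> n \<Longrightarrow> s i * (x i)^2 \<le> ip x x"
proof -
  assume i: "i \<le> n"
  have "s i * x i * x i \<le> (\<Sum>i\<le>n. s i * x i * x i)"
    by (rule member_le_sum) (use i ip_term_nonneg in auto)
  thus ?thesis unfolding ip_def by (simp add: power2_eq_square mult.assoc)
qed

lemma ip_zero: assumes "ip x x = 0" "i \<le> n" shows "x i = 0"
proof -
  have "s i * (x i)^2 \<le> 0" using ip_coord[OF assms(2), of x] assms(1) by simp
  moreover have "s i > 0" using s_pos assms(2) by simp
  ultimately show ?thesis by (simp add: mult_le_0_iff)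
qed

lemma jensen1: "(Ax x j)^2 \<le> (\<Sum>i\<le>n. b j i * (x i)^2)"
proof -
  define \<mu> where "\<mu> = Ax x j"
  have "0 \<le> (\<Sum>i\<le>n. b j i * (x i - \<mu>)^2)" using bnn by (auto intro!: sum_nonneg)
  also have "\<dots> = (\<Sum>i\<le>n. b j i * (x i)^2) - 2 * \<mu> * (\<Sum>i\<le>n. b j i * x i) + \<mu>^2 * (\<Sum>i\<le>n. b j i)"
    by (simp add: power2_diff algebra_simps sum.distrib sum_subtractf sum_distrib_left sum_distrib_right)
  also have "\<dots> = (\<Sum>i\<le>n. b j i * (x i)^2) - \<mu>^2"
    using bsum[of j] unfolding \<mu>_def Ax_def by (simp add: power2_eq_square)
  finally show ?thesis unfolding \<mu>_def by simp
qed

lemma jensen: "(\<Sum>j\<le>m. (Ax x j)^2) \<le> ip x x"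
proof -
  have "(\<Sum>j\<le>m. (Ax x j)^2) \<le> (\<Sum>j\<le>m. \<Sum>i\<le>n. b j i * (x i)^2)"
    by (intro sum_mono jensen1)
  also have "\<dots> = (\<Sum>i\<le>n. \<Sum>j\<le>m. b j i * (x i)^2)" by (rule sum.swap)
  also have "\<dots> = (\<Sum>i\<le>n. (\<Sum>j\<le>m. b j i) * x i * x i)"
    by (simp add: sum_distrib_right power2_eq_square mult.assoc)
  also have "\<dots> = ip x x" unfolding ip_def s_def ..
  finally show ?thesis .
qed

lemma ipK_eq: "ip x (K x) = (\<Sum>j\<le>m. (Ax x j)^2)"
  by (simp add: ip_K power2_eq_square)

lemma K_nonneg: "ip x (K x) \<ge> 0"
  unfolding ipK_eq by (auto intro!: sum_nonneg)

lemma ip_T: "ip x (T y) = ip x y - ip x (K y)"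
proof -
  have "ip x (T y) = ip x (\<lambda>r. y r - K y r)" by (rule ip_cong2) (simp add: T_eq)
  thus ?thesis by (simp add: ip_diff2)
qed

lemma G_nonneg: "ip x (T x) \<ge> 0"
  using jensen[of x] ipK_eq[of x] ip_T[of x x] by simp

lemma G_le: "ip x (T x) \<le> ip x x"
  using K_nonneg[of x] ip_T[of x x] by simp

lemma T_sym: "ip x (T y) = ip (T x) y"
  by (simp add: ip_T ip_sym[of "T x"] ip_sym[of "K x"] K_sym[symmetric] ip_sym[of y])

lemma Tpow_sym: "ip ((T^^a) x) y = ip x ((T^^a) y)"
proof (induction a arbitrary: y)
  case 0 then show ?case by simp
next
  case (Suc a)
  have "ip ((T^^Suc a) x) y = ip ((T^^a) x) (T y)" by (simp add: T_sym)
  also have "\<dots> = ip x ((T^^a) (T y))" by (rule Suc.IH)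
  also have "(T^^a) (T y) = (T^^Suc a) y" by (simp add: funpow_Suc_right del: funpow.simps)
  finally show ?case .
qed

lemma Tpow_ip: "ip ((T^^a) x) ((T^^c) y) = ip x ((T^^(a+c)) y)"
  by (simp add: Tpow_sym funpow_add)

lemma conv: assumes i: "i \<le> n" shows "convergent (\<lambda>k. (T^^k) e i)"
proof -
  define y where "y k = (T^^k) e" for k
  define c where "c j = ip e ((T^^j) e)" for j
  have ipy: "ip (y k) (y l) = c (k + l)" for k l unfolding y_def c_def by (rule Tpow_ip)
  have yS: "y (Suc k) = T (y k)" for k unfolding y_def by simp
  have ev: "c (2*k) = ip (y k) (y k)" for k using ipy[of k k] by (simp add: mult_2)
  have od: "c (2*k+1) = ip (y k) (T (y k))" for k using ipy[of k "Suc k"] by (simp add: yS mult_2)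
  have ev2: "c (2*k+2) = ip (T (y k)) (T (y k))" for k using ipy[of "Suc k" "Suc k"] by (simp add: yS mult_2)
  have key: "ip (T z) (T z) \<le> ip z (T z)" for z
  proof -
    define w where "w = T z"
    have Tw: "T (\<lambda>r. z r - w r) = (\<lambda>r. w r - T w r)" unfolding w_def by (simp add: lin_diff)
    have "0 \<le> ip (\<lambda>r. z r - w r) (T (\<lambda>r. z r - w r))" by (rule G_nonneg)
    also have "\<dots> = ip z w - ip z (T w) - ip w w + ip w (T w)"
      unfolding Tw by (simp add: ip_diff1 ip_diff2)
    also have "ip z (T w) = ip w w" unfolding T_sym w_def ..
    finally have "0 \<le> ip z w - 2 * ip w w + ip w (T w)" by simp
    moreover have "ip w (T w) \<le> ip w w" by (rule G_le)
    ultimately show ?thesis unfolding w_def by simp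
  qed
  have dec: "c (Suc j) \<le> c j" for j
  proof (cases "even j")
    case True then obtain k where k: "j = 2*k" by (auto elim: evenE)
    show ?thesis using ev[of k] od[of k] G_le[of "y k"] k by simp
  next
    case False then obtain k where k: "j = 2*k+1" by (auto elim: oddE)
    have "Suc j = 2*k+2" using k by simp
    thus ?thesis using od[of k] ev2[of k] key[of "y k"] k by simp
  qed
  have nn: "0 \<le> c j" for j
  proof (cases "even j")
    case True then obtain k where k: "j = 2*k" by (auto elim: evenE)
    show ?thesis using ev[of k] ip_nonneg[of "y k"] k by simp
  next
    case False then obtain k where k: "j = 2*k+1" by (auto elim: oddE)
    thus ?thesis using od[of k] G_nonneg[of "y k"] by simp
  qed
  have "decseq c" using dec by (simp add: decseq_Suc_iff)
  then obtain L where L: "c \<longlonglongrightarrow> L" using decseq_convergent[of c 0] nn by blast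
  have "Cauchy (\<lambda>k. y k i)"
  proof (rule CauchyI)
    fix \<epsilon> :: real assume e: "0 < \<epsilon>"
    define \<delta> where "\<delta> = \<epsilon>^2 * s i / 4"
    have d: "\<delta> > 0" unfolding \<delta>_def using e s_pos[OF i] by simp
    obtain M where M: "\<And>j. j \<ge> M \<Longrightarrow> norm (c j - L) < \<delta>"
      using L d unfolding LIMSEQ_iff by blast
    show "\<exists>M. \<forall>m\<ge>M. \<forall>na\<ge>M. norm (y m i - y na i) < \<epsilon>"
    proof (intro exI allI impI)
      fix k l assume kl: "M \<le> k" "M \<le> l"
      define w where "w = (\<lambda>r. y k r - y l r)"
      have "ip w w = c (k+k) - 2 * c (k+l) + c (l+l)"
        unfolding w_def by (simp add: ip_diff1 ip_diff2 ipy ip_sym[of "y l" "y k"] add.commute)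
      also have "\<dots> < 4 * \<delta>" using M[of "k+k"] M[of "k+l"] M[of "l+l"] kl by simp
      finally have "s i * (w i)^2 < \<epsilon>^2 * s i" using ip_coord[OF i, of w] unfolding \<delta>_def by simp
      hence "(w i)^2 < \<epsilon>^2" using s_pos[OF i] by (simp add: mult.commute)
      hence "\<bar>w i\<bar> < \<epsilon>" using power2_less_imp_less[of "\<bar>w i\<bar>" \<epsilon>] e by simp
      thus "norm (y k i - y l i) < \<epsilon>" unfolding w_def by simp
    qed
  qed
  thus ?thesis unfolding y_def Cauchy_convergent_iff .
qed



lemma K_zero_Ax: assumes "K u = (\<lambda>r. 0)" "j \<le> m" shows "Ax u j = 0"
proof -
  have "(\<Sum>j\<le>m. (Ax u j)^2) = 0" using ipK_eq[of u] assms(1) by (simp add: ip_zero2)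
  hence "\<forall>j\<in>{..m}. (Ax u j)^2 = 0" by (subst (asm) sum_nonneg_eq_0_iff) auto
  thus ?thesis using assms(2) by simp
qed

lemma KK: assumes "K (K y) = (\<lambda>r. 0)" shows "K y = (\<lambda>r. 0)"
proof
  fix r
  have "ip (K y) (K y) = ip y (K (K y))" by (rule K_sym[of y "K y", symmetric])
  also have "\<dots> = 0" using assms by (simp add: ip_zero2)
  finally have z: "ip (K y) (K y) = 0" .
  show "K y r = 0"
  proof (cases "r \<le> n")
    case True thus ?thesis using ip_zero[OF z] by simp
  next
    case False thus ?thesis using K_out by simp
  qed
qed

lemma Kpow: "(K^^Suc a) y = (\<lambda>r. 0) \<Longrightarrow> K y = (\<lambda>r. 0)"
proof (induction a arbitrary: y)
  case 0 thus ?case by simp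
next
  case (Suc a)
  have e: "(K^^Suc a) (K y) = (K^^Suc (Suc a)) y" by (simp only: funpow_Suc_right o_apply)
  have "(K^^Suc a) (K y) = (\<lambda>r. 0)" unfolding e by (rule Suc.prems)
  hence "K (K y) = (\<lambda>r. 0)" by (rule Suc.IH)
  thus ?case by (rule KK)
qed

lemma Kpow_out: "(\<And>r. n < r \<Longrightarrow> g r = 0) \<Longrightarrow> n < r \<Longrightarrow> (K^^i) g r = 0"
  by (cases i) (auto simp: K_out)

lemma exists_sol:
  fixes q :: "nat \<Rightarrow> real"
  defines "g \<equiv> (\<lambda>i. if i \<le> n then (\<Sum>j\<le>m. b j i * q j) / s i else 0)"
  shows "\<exists>xs. K xs = g"
proof -
  have g_out: "\<And>r. n < r \<Longrightarrow> g r = 0" unfolding g_def by simp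
  have ipg: "ip g u = (\<Sum>j\<le>m. q j * Ax u j)" for u
  proof -
    have "ip g u = (\<Sum>i\<le>n. \<Sum>j\<le>m. b j i * q j * u i)"
      unfolding ip_def g_def by (intro sum.cong refl) (auto simp: sum_distrib_right dest: s_pos)
    also have "\<dots> = (\<Sum>j\<le>m. \<Sum>i\<le>n. b j i * q j * u i)" by (rule sum.swap)
    also have "\<dots> = (\<Sum>j\<le>m. q j * Ax u j)" unfolding Ax_def by (simp add: sum_distrib_left mult_ac)
    finally show ?thesis .
  qed
  obtain c where c: "\<exists>i\<le>Suc n. c i \<noteq> 0" "\<forall>r<Suc n. (\<Sum>i\<le>Suc n. c i * (K^^i) g r) = 0"
    using lin_dep_exists[of "Suc n" "\<lambda>i r. (K^^i) g r"] by blast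
  define a where "a = (LEAST i. c i \<noteq> 0)"
  obtain i0 where i0: "i0 \<le> Suc n" "c i0 \<noteq> 0" using c(1) by blast
  have ca: "c a \<noteq> 0" unfolding a_def using LeastI[of "\<lambda>i. c i \<noteq> 0" i0] i0 by blast
  have aN: "a \<le> Suc n" unfolding a_def using Least_le[of "\<lambda>i. c i \<noteq> 0" i0] i0 by linarith
  have cl: "\<And>i. i < a \<Longrightarrow> c i = 0" unfolding a_def using not_less_Least by blast
  have Z: "(\<lambda>r. \<Sum>i\<le>Suc n. c i * (K^^i) g r) = (\<lambda>r. 0)"
  proof
    fix r show "(\<Sum>i\<le>Suc n. c i * (K^^i) g r) = 0"
    proof (cases "r < Suc n")
      case True thus ?thesis using c(2) by simp
    next
      case False hence "n < r" by simp
      thus ?thesis using Kpow_out[OF g_out] by simp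
    qed
  qed
  define y where "y = (\<lambda>r. \<Sum>i\<le>Suc n. c i * (K^^(i - a)) g r)"
  have Ky: "(K^^a) y = (\<lambda>r. 0)"
  proof -
    have "(K^^a) y = (\<lambda>r. \<Sum>i\<le>Suc n. c i * (K^^a) ((K^^(i - a)) g) r)"
      unfolding y_def by (rule lin_pow_sum)
    also have "\<dots> = (\<lambda>r. \<Sum>i\<le>Suc n. c i * (K^^i) g r)"
    proof (intro ext sum.cong refl)
      fix r i
      show "c i * (K^^a) ((K^^(i - a)) g) r = c i * (K^^i) g r"
      proof (cases "i < a")
        case True thus ?thesis using cl by simp
      next
        case False
        hence ai: "a + (i - a) = i" by simp
        have "(K^^(a + (i - a))) g = (K^^a) ((K^^(i - a)) g)" by (simp only: funpow_add o_apply)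
        thus ?thesis unfolding ai by simp
      qed
    qed
    also have "\<dots> = (\<lambda>r. 0)" by (rule Z)
    finally show ?thesis .
  qed
  have K0: "K y = (\<lambda>r. 0)"
  proof (cases a)
    case 0 thus ?thesis using Ky lin_zero by simp
  next
    case (Suc a') thus ?thesis using Ky Kpow[of a' y] by simp
  qed
  define w where "w = (\<lambda>r. \<Sum>i\<le>Suc n. (if a < i then c i else 0) * (K^^(i - a - 1)) g r)"
  have Kw: "K w = (\<lambda>r. \<Sum>i\<le>Suc n. (if a < i then c i else 0) * K ((K^^(i - a - 1)) g) r)"
    unfolding w_def by (rule lin_sum)
  have ydec: "y r = c a * g r + K w r" for r
  proof -
    have "y r = (\<Sum>i\<le>Suc n. (if i = a then c a * g r else 0) + (if a < i then c i else 0) * K ((K^^(i - a - 1)) g) r)"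
      unfolding y_def
    proof (intro sum.cong refl)
      fix i
      show "c i * (K ^^ (i - a)) g r = (if i = a then c a * g r else 0) + (if a < i then c i else 0) * K ((K ^^ (i - a - 1)) g) r"
      proof (cases "i < a")
        case True thus ?thesis using cl by simp
      next
        case False
        show ?thesis
        proof (cases "i = a")
          case True thus ?thesis by simp
        next
          case False
          define k where "k = i - a - 1"
          from False \<open>\<not> i < a\<close> have eq: "i - a = Suc k" "a < i" unfolding k_def by auto
          have "(K^^(i - a)) g = K ((K^^k) g)" unfolding eq by simp
          thus ?thesis using False eq(2) unfolding k_def by simp
        qed
      qed
    qed
    also have "\<dots> = c a * g r + K w r" unfolding Kw using aN by (simp add: sum.distrib)
    finally show ?thesis .
  qed
  have ydef: "y = (\<lambda>r. c a * g r + K w r)" using ydec by (rule ext)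
  have "ip y y = c a * ip g y + ip (K w) y"
    by (subst (1) ydef) (simp add: ip_add1 ip_scale1)
  also have "ip g y = 0" unfolding ipg using K_zero_Ax[OF K0] by simp
  also have "ip (K w) y = 0" using K_sym[of w y] K0 by (simp add: ip_zero2)
  finally have yy: "ip y y = 0" by simp
  define xs where "xs = (\<lambda>r. (-1 / c a) * w r)"
  have "K xs = g"
  proof
    fix r
    have "K xs r = (-1 / c a) * K w r" unfolding xs_def lin_scale ..
    also have "\<dots> = g r"
    proof (cases "r \<le> n")
      case True
      hence "c a * g r + K w r = 0" using ip_zero[OF yy True] ydec by simp
      thus ?thesis using ca by (simp add: field_simps)
    next
      case False thus ?thesis using K_out g_out by simp
    qed
    finally show "K xs r = g r" .
  qed
  thus ?thesis by blast
qed

lemma iter_conv: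
  fixes p :: "nat \<Rightarrow> nat \<Rightarrow> real" and q :: "nat \<Rightarrow> real"
  assumes rec: "\<And>k i. i \<le> n \<Longrightarrow> p (Suc k) i = T (p k) i + (\<Sum>j\<le>m. b j i * q j) / s i"
    and i: "i \<le> n"
  shows "convergent (\<lambda>k. p k i)"
proof -
  define g where "g = (\<lambda>i. if i \<le> n then (\<Sum>j\<le>m. b j i * q j) / s i else 0)"
  obtain xs where xs: "K xs = g" using exists_sol[of q] unfolding g_def by blast
  define e where "e = (\<lambda>r. p 0 r - xs r)"
  have main: "\<forall>i\<le>n. p k i = (T^^k) e i + xs i" for k
  proof (induction k)
    case 0 thus ?case unfolding e_def by simp
  next
    case (Suc k)
    have "T (p k) = T (\<lambda>r. (T^^k) e r + xs r)" by (rule lin_cong) (use Suc in auto)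
    also have "\<dots> = (\<lambda>r. T ((T^^k) e) r + T xs r)" by (rule lin_add)
    finally have Tp: "T (p k) = (\<lambda>r. T ((T^^k) e) r + T xs r)" .
    show ?case
    proof (intro allI impI)
      fix i assume i: "i \<le> n"
      have "p (Suc k) i = T ((T^^k) e) i + T xs i + g i" using rec[OF i] Tp i unfolding g_def by simp
      also have "T xs i = xs i - g i" using T_eq[OF i] xs by simp
      finally show "p (Suc k) i = (T^^Suc k) e i + xs i" by simp
    qed
  qed
  have "(\<lambda>k. p k i) = (\<lambda>k. (T^^k) e i + xs i)" using main i by auto
  moreover have "convergent (\<lambda>k. (T^^k) e i + xs i)"
    by (intro convergent_add conv i convergent_const)
  ultimately show ?thesis by simp
qed

end
theorem theorem1:
  fixes B :: "nat \<Rightarrow> 'p \<Rightarrow> real" and t :: "nat \<Rightarrow> 'p"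
    and n m d :: nat and Q P0 :: "real mat" and P :: "nat \<Rightarrow> real mat"
  defines "A \<equiv> mat (m+1) (n+1) (\<lambda>(j, i). B i (t j))"
  defines "\<Lambda> \<equiv> mat_diag (n+1) (\<lambda>i. 1 / (\<Sum>j\<le>m. B i (t j)))"
  assumes "n \<le> m"
    and "\<And>i x. i \<le> n \<Longrightarrow> B i x \<ge> 0"
    and "\<And>x. (\<Sum>i\<le>n. B i x) = 1"
    and "\<And>i. i \<le> n \<Longrightarrow> \<exists>j\<le>m. B i (t j) \<noteq> 0"
    and "det (transpose_mat A * A) = 0"
    and "d \<ge> 1"
    and "Q \<in> carrier_mat (m+1) d"
    and "P0 \<in> carrier_mat (n+1) d"
    and "P 0 = P0"
    and "\<And>k. P (Suc k) = (1\<^sub>m (n+1) - \<Lambda> * transpose_mat A * A) * P k + \<Lambda> * transpose_mat A * Q"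
  shows "mat_seq_convergent (n+1) d P"
proof -
  note asm = assms(3-)
  have spos: "(\<Sum>j\<le>m. B i (t j)) > 0" if i: "i \<le> n" for i
  proof -
    obtain j where j: "j \<le> m" "B i (t j) \<noteq> 0" using asm(4)[OF i] by blast
    have "B i (t j) \<le> (\<Sum>j\<le>m. B i (t j))" 
      by (rule member_le_sum[of j "{..m}" "\<lambda>j. B i (t j)"]) (use j asm(2)[OF i] in auto)
    moreover have "B i (t j) > 0" using j asm(2)[OF i, of "t j"] by simp
    ultimately show ?thesis by simp
  qed
  interpret L: lsp n m "\<lambda>j i. B i (t j)"
    by unfold_locales (use asm(2,3) spos in auto)
  have sdef: "L.s i = (\<Sum>j\<le>m. B i (t j))" for i using L.s_def[of i] by simp
  have Acar: "A \<in> carrier_mat (m+1) (n+1)" unfolding A_def by simp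
  have LAt: "\<Lambda> * transpose_mat A = mat (n+1) (m+1) (\<lambda>(i,j). (1 / L.s i) * B i (t j))"
    unfolding \<Lambda>_def sdef
    by (subst mat_diag_mult_left[of _ _ "m+1"]) (auto simp: A_def intro!: eq_matI)
  have C: "(\<Lambda> * transpose_mat A * A) $$ (i,l) = L.kk i l" if "i < n+1" "l < n+1" for i l
    using that unfolding LAt
    by (simp add: A_def scalar_prod_def L.kk_def sdef atLeast0LessThan lessThan_Suc_atMost
        sum_divide_distrib less_Suc_eq_le)
  have E: "(\<Lambda> * transpose_mat A * Q) $$ (i,c) = (\<Sum>j\<le>m. B i (t j) * Q $$ (j,c)) / L.s i"
    if "i < n+1" "c < d" for i c
    using that asm(7) unfolding LAt
    by (simp add: scalar_prod_def sdef atLeast0LessThan lessThan_Suc_atMost sum_divide_distrib)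
  have LA: "\<Lambda> * transpose_mat A \<in> carrier_mat (n+1) (m+1)"
    using Acar unfolding \<Lambda>_def by (intro mult_carrier_mat[OF mat_diag_dim]) simp
  have Y: "\<Lambda> * transpose_mat A * Q \<in> carrier_mat (n+1) d" using LA asm(7) by (rule mult_carrier_mat)
  have X: "1\<^sub>m (n+1) - \<Lambda> * transpose_mat A * A \<in> carrier_mat (n+1) (n+1)"
    by (rule minus_carrier_mat, rule mult_carrier_mat[OF LA Acar])
  have Pcar: "P k \<in> carrier_mat (n+1) d" for k
  proof (cases k)
    case 0 thus ?thesis using asm(8,9) by simp
  next
    case (Suc k') show ?thesis unfolding Suc asm(10) by (rule add_carrier_mat[OF Y])
  qed
  have rec: "P (Suc k) $$ (i,c) = lin n L.tt (\<lambda>l. P k $$ (l,c)) i + (\<Sum>j\<le>m. B i (t j) * Q $$ (j,c)) / L.s i"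
    if i: "i \<le> n" and c: "c < d" for k i c
  proof -
    have lt: "{..<n+1} = {..n}" by auto
    have "P (Suc k) $$ (i,c) = ((1\<^sub>m (n+1) - \<Lambda> * transpose_mat A * A) * P k) $$ (i,c)
       + (\<Lambda> * transpose_mat A * Q) $$ (i,c)"
      unfolding asm(10) using i c carrier_matD[OF Y] by simp
    also have "(\<Lambda> * transpose_mat A * Q) $$ (i,c) = (\<Sum>j\<le>m. B i (t j) * Q $$ (j,c)) / L.s i"
      using i c by (intro E) auto
    also have "((1\<^sub>m (n+1) - \<Lambda> * transpose_mat A * A) * P k) $$ (i,c)
        = (\<Sum>l<n+1. (1\<^sub>m (n+1) - \<Lambda> * transpose_mat A * A) $$ (i,l) * P k $$ (l,c))"
      using i c carrier_matD[OF Pcar[of k]] carrier_matD[OF X] by (simp add: scalar_prod_def atLeast0LessThan)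
    also have "\<dots> = (\<Sum>l\<le>n. L.tt i l * P k $$ (l,c))"
      unfolding lt
    proof (intro sum.cong refl)
      fix l assume l: "l \<in> {..n}"
      have "(1\<^sub>m (n+1) - \<Lambda> * transpose_mat A * A) $$ (i,l) = (if i = l then 1 else 0) - L.kk i l"
        using i l C[of i l] carrier_matD[OF mult_carrier_mat[OF LA Acar]] by simp
      thus "(1\<^sub>m (n+1) - \<Lambda> * transpose_mat A * A) $$ (i,l) * P k $$ (l,c) = L.tt i l * P k $$ (l,c)"
        using i by (simp add: L.tt_def)
    qed
    also have "\<dots> = lin n L.tt (\<lambda>l. P k $$ (l,c)) i" unfolding lin_def ..
    finally show ?thesis .
  qed
  have cv: "convergent (\<lambda>k. P k $$ (i,c))" if "i < n+1" "c < d" for i c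
    by (rule L.iter_conv[of "\<lambda>k l. P k $$ (l,c)" "\<lambda>j. Q $$ (j,c)"]) (use rec that in auto)
  show ?thesis unfolding mat_seq_convergent_def
  proof (intro bexI allI impI)
    show "mat (n+1) d (\<lambda>(i,c). lim (\<lambda>k. P k $$ (i,c))) \<in> carrier_mat (n+1) d" by simp
    fix i c assume "i < n+1" "c < d"
    thus "(\<lambda>k. P k $$ (i,c)) \<longlonglongrightarrow> mat (n+1) d (\<lambda>(i,c). lim (\<lambda>k. P k $$ (i,c))) $$ (i,c)"
      using cv[of i c] convergent_LIMSEQ_iff[of "\<lambda>k. P k $$ (i,c)"] by simp
  qed
qed

end
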